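(* Let $q$ be a prime power and $1\leq d\leq n-1$. Then $\mathrm{PG}_d(n,q)$ is additive under $\mathrm{EA}(q^{n+1})$.
   Context: $\mathrm{PG}_d(n,q)$ is the design whose points are the points of $\mathrm{PG}(n,q)$ and whose blocks are the point sets of all $d$-dimensional projective subspaces. $\mathrm{EA}(q^{n+1})$ is the elementary abelian group of order $q^{n+1}$. A design $(V,\mathscr B)$ is additive under an abelian group $G$ if there is an injective map $f:V\to G$ such that $\sum_{x\in B}f(x)=0$ for every block $B\in\mathscr B$. *)

theory Defs
  imports "HOL-Analysis.Analysis"
begin

text \<open>Projective geometry PG(n,q) modelled on the vector space F^(n+1) = 'a^'n,
  where 'a is a finite field with q elements and CARD('n) = n+1.
  A point is a 1-dimensional subspace; a d-dimensional projective subspace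
  is a (d+1)-dimensional linear subspace.\<close>

definition PG_points :: "(('a::field)^'n) set set" where
  "PG_points = {U. vec.subspace U \<and> vec.dim U = 1}"

definition PG_blocks :: "nat \<Rightarrow> (('a::field)^'n) set set set" where
  "PG_blocks d = {{P \<in> PG_points. P \<subseteq> W} | W. vec.subspace W \<and> vec.dim W = d + 1}"

definition additive_under :: "'v set \<Rightarrow> 'v set set \<Rightarrow> ('v \<Rightarrow> 'g::ab_group_add) \<Rightarrow> bool" where
  "additive_under V Bs f \<longleftrightarrow> inj_on f V \<and> (\<forall>B\<in>Bs. (\<Sum>x\<in>B. f x) = 0)"

end

theory Submission
  imports Defs "HOL-Algebra.Algebraic_Closure_Type" "HOL-Number_Theory.Number_Theory"
begin


lemma ff_pow_card:
  assumes "finite (UNIV :: 'a::field set)"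
  shows "(x::'a) ^ card (UNIV :: 'a set) = x"
proof (cases "x = 0")
  case False
  have cpos: "card (UNIV :: 'a set) > 0" using assms by (simp add: card_gt_0_iff)
  have "x * (\<Prod>y\<in>UNIV-{0}. x * y) = x * x ^ (card (UNIV :: 'a set) - 1) * \<Prod>(UNIV-{0})"
    using assms by (simp add: prod.distrib mult_ac card_Diff_singleton)
  also have "x * x ^ (card (UNIV :: 'a set) - 1) = x ^ Suc (card (UNIV :: 'a set) - 1)"
    by (subst power_Suc) auto
  also have "Suc (card (UNIV :: 'a set) - 1) = card (UNIV :: 'a set)"
    using cpos by simp
  also have "(\<Prod>y\<in>UNIV-{0}. x * y) = (\<Prod>y\<in>UNIV-{0}. y)"
    by (rule prod.reindex_bij_witness[of _ "\<lambda>y. y / x" "\<lambda>y. x * y"]) (use False in auto)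
  finally show ?thesis
    using assms by simp
next
  case True
  have "card (UNIV :: 'a set) > 0" using assms by (simp add: card_gt_0_iff)
  then show ?thesis using True by (simp add: power_0_left)
qed

lemma ff_CHAR_prime:
  assumes "finite (UNIV :: 'a::field set)"
  shows "Factorial_Ring.prime CHAR('a)"
  using prime_CHAR_semidom finite_imp_CHAR_pos[OF assms] by blast

lemma ff_card_zero:
  assumes "finite (UNIV :: 'a::field set)"
  shows "of_nat (card (UNIV :: 'a set)) = (0::'a)"
  using CHAR_dvd_CARD[where 'a='a] of_nat_eq_0_iff_char_dvd by blast

lemma ff_card_ge2:
  assumes "finite (UNIV :: 'a::field set)"
  shows "card (UNIV :: 'a set) \<ge> 2"
proof -
  have "{0, 1::'a} \<subseteq> UNIV" by simp
  from card_mono[OF assms this] show ?thesis by simp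
qed

lemma ff_pow_sum_small:
  assumes fin: "finite (UNIV :: 'a::field set)" and k: "k < card (UNIV :: 'a set) - 1"
  shows "(\<Sum>t\<in>UNIV. (t::'a) ^ k) = 0"
proof (cases "k = 0")
  case True
  then show ?thesis using ff_card_zero[OF fin] by simp
next
  case False
  have "\<exists>c::'a. c \<noteq> 0 \<and> c ^ k \<noteq> 1"
  proof (rule ccontr)
    assume "\<not> ?thesis"
    hence all: "\<And>c::'a. c \<noteq> 0 \<Longrightarrow> c ^ k = 1" by blast
    define p where "p = Polynomial.monom (1::'a) k - 1"
    have pne: "p \<noteq> 0"
    proof
      assume "p = 0"
      hence "Polynomial.coeff p k = 0" by simp
      thus False using False by (simp add: p_def coeff_monom)
    qed
    have degp: "Polynomial.degree p \<le> k"
      unfolding p_def by (intro degree_diff_le) (auto simp: degree_monom_le)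
    have "UNIV - {0::'a} \<subseteq> {x. poly p x = 0}"
      using all by (auto simp: p_def poly_monom)
    hence "card (UNIV - {0::'a}) \<le> card {x. poly p x = 0}"
      by (intro card_mono poly_roots_finite pne)
    also have "\<dots> \<le> Polynomial.degree p" by (rule card_poly_roots_bound[OF pne])
    finally have "card (UNIV :: 'a set) - 1 \<le> k"
      using fin degp by (simp add: card_Diff_singleton)
    thus False using k by simp
  qed
  then obtain c :: 'a where c: "c \<noteq> 0" "c ^ k \<noteq> 1" by blast
  have "(\<Sum>t\<in>UNIV. (t::'a) ^ k) = (\<Sum>t\<in>UNIV. (c * t) ^ k)"
    by (rule sum.reindex_bij_witness[of _ "\<lambda>y. c * y" "\<lambda>y. y / c"]) (use c in auto)
  also have "\<dots> = c ^ k * (\<Sum>t\<in>UNIV. t ^ k)"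
    by (simp add: power_mult_distrib sum_distrib_left)
  finally have "(1 - c ^ k) * (\<Sum>t\<in>UNIV. (t::'a) ^ k) = 0"
    by (simp add: algebra_simps)
  thus ?thesis using c by simp
qed

lemma ff_pow_sum_top:
  assumes fin: "finite (UNIV :: 'a::field set)"
  shows "(\<Sum>t\<in>UNIV. (t::'a) ^ (card (UNIV :: 'a set) - 1)) = -1"
proof -
  let ?q = "card (UNIV :: 'a set)"
  have q2: "?q \<ge> 2" by (rule ff_card_ge2[OF fin])
  have "(\<Sum>t\<in>UNIV. (t::'a) ^ (?q - 1)) = (\<Sum>t\<in>UNIV - {0}. t ^ (?q - 1))"
    using q2 by (intro sum.mono_neutral_right) (auto simp: fin)
  also have "\<dots> = (\<Sum>t\<in>UNIV - {0::'a}. 1)"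
  proof (intro sum.cong refl)
    fix t :: 'a assume "t \<in> UNIV - {0}"
    hence t: "t \<noteq> 0" by simp
    have "t * t ^ (?q - 1) = t ^ ?q" using q2 by (cases ?q) auto
    also have "\<dots> = t" by (rule ff_pow_card[OF fin])
    finally show "t ^ (?q - 1) = 1" using t by simp
  qed
  also have "\<dots> = of_nat (?q - 1)" using fin by (simp add: card_Diff_singleton)
  also have "\<dots> = of_nat ?q - 1" using q2 by (simp add: of_nat_diff)
  also have "\<dots> = -1" by (simp add: ff_card_zero[OF fin])
  finally show ?thesis .
qed


lemma proots_linprod:
  "proots (\<Prod>x\<in>#A. [:-x, 1::'b::idom:]) = A"
proof (induction A)
  case empty
  then show ?case by simp
next
  case (add x A)
  have ne: "(\<Prod>x\<in>#A. [:-x, 1::'b:]) \<noteq> 0"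
    by (auto simp: prod_mset_zero_iff)
  have "proots (\<Prod>y\<in>#add_mset x A. [:-y, 1::'b:]) = proots ([:-x, 1:] * (\<Prod>y\<in>#A. [:-y, 1::'b:]))"
    by simp
  also have "\<dots> = proots [:-x, 1:] + proots (\<Prod>y\<in>#A. [:-y, 1::'b:])"
    by (rule proots_mult) (use ne in auto)
  also have "\<dots> = add_mset x A" using add.IH
    using proots_linear_factor[of "-x"] by simp
  finally show ?case .
qed

lemma ac_card_roots:
  fixes N :: nat
  assumes N2: "N \<ge> 2" and N0: "of_nat N = (0::'b::alg_closed_field)"
  shows "card {x::'b. x ^ N = x} = N"
proof -
  define P :: "'b poly" where "P = Polynomial.monom 1 N - [:0, 1:]"
  have polyP: "poly P x = x ^ N - x" for x by (simp add: P_def poly_monom)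
  have cP: "Polynomial.coeff P N = 1" using N2 by (simp add: P_def coeff_monom coeff_pCons split: nat.splits)
  have "Polynomial.degree P \<le> N"
    unfolding P_def by (intro degree_diff_le) (use N2 in \<open>auto simp: degree_monom_le\<close>)
  moreover have "Polynomial.degree P \<ge> N" using cP by (intro le_degree) simp
  ultimately have degP: "Polynomial.degree P = N" by simp
  have Pne: "P \<noteq> 0" using cP by auto
  have dP: "pderiv P = -1"
    using N0 by (simp add: P_def pderiv_monom pderiv_diff pderiv_pCons) (simp add: one_pCons)
  have ord1: "Polynomial.order a P \<le> 1" for a
  proof (rule ccontr)
    assume "\<not> ?thesis"
    hence "2 \<le> Polynomial.order a P" by simp
    hence "[:-a, 1:] ^ 2 dvd P"
      using order_1[of a P] by (meson dvd_trans le_imp_power_dvd)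
    then obtain Q where Q: "P = [:-a, 1:] ^ 2 * Q" by (elim dvdE)
    have d1: "pderiv [:-a, 1:] = (1::'b poly)" by (simp add: pderiv_pCons)
    have r0: "poly [:-a, 1:] a = 0" by simp
    have "poly (pderiv P) a = 0"
      by (simp only: Q power2_eq_square pderiv_mult d1 poly_mult poly_add r0) simp
    thus False using dP by simp
  qed
  obtain A where A: "size A = Polynomial.degree P"
      "P = Polynomial.smult (Polynomial.lead_coeff P) (\<Prod>x\<in>#A. [:-x, 1:])"
    using alg_closed_imp_factorization[OF Pne] by blast
  have lc: "Polynomial.lead_coeff P \<noteq> 0" using Pne by simp
  have "proots P = proots (\<Prod>x\<in>#A. [:-x, 1:])"
    by (subst A(2)) (rule proots_smult[OF lc])
  also have "\<dots> = A" by (rule proots_linprod)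
  finally have "proots P = A" .
  hence cnt: "count A a \<le> 1" for a
    using ord1[of a] Pne by (metis count_proots)
  have "A = mset_set (set_mset A)"
  proof (rule multiset_eqI)
    fix a show "count A a = count (mset_set (set_mset A)) a"
    proof (cases "a \<in># A")
      case True
      hence "count A a > 0" by simp
      with cnt[of a] have "count A a = 1" by linarith
      thus ?thesis using True by (simp add: count_mset_set)
    next
      case False
      thus ?thesis by (simp add: count_mset_set not_in_iff)
    qed
  qed
  hence "size A = card (set_mset A)" by (metis size_mset_set)
  also have "set_mset A = {x. poly P x = 0}"
    using \<open>proots P = A\<close> Pne by (metis set_count_proots)
  also have "\<dots> = {x. x ^ N = x}" by (simp add: polyP)
  finally show ?thesis using A(1) degP by simp
qed



context vector_space
begin

lemma card_span_fin:
  assumes fin: "finite (UNIV :: 'a set)" and ind: "independent B" and fB: "finite B"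
  shows "card (span B) = card (UNIV :: 'a set) ^ card B"
proof -
  define \<Phi> where "\<Phi> u = (\<Sum>v\<in>B. u v *s v)" for u
  have sp: "span B = \<Phi> ` (B \<rightarrow>\<^sub>E UNIV)"
  proof -
    have "span B = range \<Phi>" unfolding \<Phi>_def by (rule span_finite[OF fB])
    also have "range \<Phi> = \<Phi> ` (B \<rightarrow>\<^sub>E UNIV)"
    proof
      show "range \<Phi> \<subseteq> \<Phi> ` (B \<rightarrow>\<^sub>E UNIV)"
      proof
        fix x assume "x \<in> range \<Phi>"
        then obtain u where x: "x = \<Phi> u" by blast
        have "\<Phi> u = \<Phi> (restrict u B)" unfolding \<Phi>_def by (intro sum.cong) auto
        thus "x \<in> \<Phi> ` (B \<rightarrow>\<^sub>E UNIV)" using x by auto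
      qed
    qed auto
    finally show ?thesis .
  qed
  have inj: "inj_on \<Phi> (B \<rightarrow>\<^sub>E UNIV)"
  proof (rule inj_onI)
    fix u u' assume u: "u \<in> B \<rightarrow>\<^sub>E UNIV" and u': "u' \<in> B \<rightarrow>\<^sub>E UNIV" and eq: "\<Phi> u = \<Phi> u'"
    have "(\<Sum>v\<in>B. (u v - u' v) *s v) = \<Phi> u - \<Phi> u'"
      unfolding \<Phi>_def by (simp add: scale_left_diff_distrib sum_subtractf)
    also have "\<dots> = 0" using eq by simp
    finally have z: "(\<Sum>v\<in>B. (u v - u' v) *s v) = 0" .
    have "\<forall>v\<in>B. u v - u' v = 0"
    proof (rule ccontr)
      assume "\<not> ?thesis"
      hence "\<exists>v\<in>B. (\<lambda>v. u v - u' v) v \<noteq> 0" by simp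
      hence "dependent B"
        by (subst dependent_finite[OF fB]) (rule exI[of _ "\<lambda>v. u v - u' v"], use z in simp)
      thus False using ind by simp
    qed
    thus "u = u'" using u u' by (intro PiE_ext) auto
  qed
  have "card (span B) = card (B \<rightarrow>\<^sub>E (UNIV :: 'a set))"
    unfolding sp by (rule card_image[OF inj])
  also have "\<dots> = card (UNIV :: 'a set) ^ card B"
    by (simp add: card_PiE fB)
  finally show ?thesis .
qed

lemma card_subspace_fin:
  assumes fin: "finite (UNIV :: 'a set)" and S: "subspace S" and fS: "finite S"
  shows "card S = card (UNIV :: 'a set) ^ dim S"
proof -
  obtain B where B: "B \<subseteq> S" "independent B" "S \<subseteq> span B" "card B = dim S"
    using basis_exists[of S] by metis
  have "span B = S"
    using B span_minimal[OF B(1) S] by auto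
  moreover have "finite B" using B(1) fS by (rule finite_subset)
  ultimately show ?thesis using card_span_fin[OF fin B(2)] B(4) by simp
qed

end


interpretation ac: vector_space "\<lambda>c (x::'a::field alg_closure). to_ac c * x"
  by unfold_locales (simp_all add: algebra_simps)

lemma ff_q_prime_power:
  assumes fin: "finite (UNIV :: 'a::field set)"
  shows "\<exists>j. card (UNIV :: 'a set) = CHAR('a) ^ j"
proof -
  let ?q = "card (UNIV :: 'a set)" and ?p = "CHAR('a)"
  have pp: "Factorial_Ring.prime ?p" by (rule ff_CHAR_prime[OF fin])
  have pq: "?p dvd ?q" by (rule CHAR_dvd_CARD)
  have q2: "?q \<ge> 2" by (rule ff_card_ge2[OF fin])
  have "\<not> ?p dvd (?q - 1)"
  proof
    assume "?p dvd ?q - 1"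
    with pq have "?p dvd ?q - (?q - 1)" by (rule dvd_diff_nat)
    hence "?p dvd 1" using q2 by simp
    thus False using pp by simp
  qed
  hence cop: "coprime ?p (?q - 1)" using pp by (simp add: prime_imp_coprime)
  define m where "m = totient (?q - 1)"
  have m0: "m > 0" unfolding m_def using q2 by simp
  have "[?p ^ m = 1] (mod (?q - 1))" unfolding m_def by (rule euler_theorem[OF cop])
  hence dv: "(?q - 1) dvd (?p ^ m - 1)" by (rule cong_to_1_nat)
  define M where "M = ?p ^ m"
  have p2: "?p \<ge> 2" using pp by (simp add: prime_ge_2_nat)
  have M2: "M \<ge> 2"
  proof -
    have "?p ^ 1 \<le> ?p ^ m" using m0 p2 by (intro power_increasing) auto
    thus ?thesis using p2 unfolding M_def by simp
  qed
  have powM: "c ^ M = c" for c :: 'a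
  proof (cases "c = 0")
    case True thus ?thesis using M2 by (simp add: power_0_left)
  next
    case False
    have "c * c ^ (?q - 1) = c ^ ?q" using q2 by (cases ?q) auto
    also have "\<dots> = c" by (rule ff_pow_card[OF fin])
    finally have c1: "c ^ (?q - 1) = 1" using False by simp
    obtain r where r: "M - 1 = (?q - 1) * r" using dv unfolding M_def by (elim dvdE)
    have "c ^ M = c * c ^ (M - 1)" using M2 by (cases M) auto
    also have "\<dots> = c * (c ^ (?q - 1)) ^ r" by (simp only: r power_mult)
    finally show ?thesis using c1 by simp
  qed
  define E where "E = {x :: 'a alg_closure. x ^ M = x}"
  have chL: "CHAR('a alg_closure) = ?p" by simp
  have ofM: "of_nat M = (0 :: 'a alg_closure)"
  proof -
    have "of_nat ?p = (0 :: 'a alg_closure)" by (metis chL of_nat_CHAR)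
    thus ?thesis unfolding M_def using m0 by (simp add: of_nat_power power_0_left)
  qed
  have cardE: "card E = M" unfolding E_def by (rule ac_card_roots[OF M2 ofM])
  hence finE: "finite E" using M2 by (intro card_ge_0_finite) simp
  have subE: "ac.subspace E"
    unfolding ac.subspace_def
  proof (intro conjI ballI allI)
    show "0 \<in> E" unfolding E_def using M2 by (simp add: power_0_left)
  next
    fix x y assume "x \<in> E" "y \<in> E"
    thus "x + y \<in> E" unfolding E_def
      using freshmans_dream'[where 'a="'a alg_closure", of M m] pp chL by (simp add: M_def)
  next
    fix c x assume "x \<in> E"
    thus "to_ac c * x \<in> E" unfolding E_def
      by (simp add: power_mult_distrib powM flip: to_ac_power)
  qed
  have "card E = ?q ^ ac.dim E" by (rule ac.card_subspace_fin[OF fin subE finE])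
  hence eq: "?q ^ ac.dim E = ?p ^ m" using cardE M_def by simp
  have "ac.dim E \<noteq> 0"
  proof
    assume "ac.dim E = 0"
    hence "?p ^ m = 1" using eq by simp
    thus False using M2 M_def by simp
  qed
  hence "?q dvd ?q ^ ac.dim E" by simp
  hence "?q dvd ?p ^ m" using eq by simp
  thus ?thesis using divides_primepow_nat[OF pp] by blast
qed


lemma field_K:
  assumes fin: "finite (UNIV :: 'a::field set)" and N1: "N \<ge> 1"
  shows "\<exists>K :: 'a alg_closure set. ac.subspace K \<and> finite K \<and>
           card K = card (UNIV :: 'a set) ^ N \<and> (\<forall>x\<in>K. \<forall>y\<in>K. x * y \<in> K)"
proof -
  let ?q = "card (UNIV :: 'a set)" and ?p = "CHAR('a)"
  obtain j where qj: "?q = ?p ^ j" using ff_q_prime_power[OF fin] by blast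
  have pp: "Factorial_Ring.prime ?p" by (rule ff_CHAR_prime[OF fin])
  have q2: "?q \<ge> 2" by (rule ff_card_ge2[OF fin])
  define Q where "Q = ?q ^ N"
  have Q2: "Q \<ge> 2"
  proof -
    have "?q ^ 1 \<le> ?q ^ N" using N1 q2 by (intro power_increasing) auto
    thus ?thesis using q2 unfolding Q_def by simp
  qed
  have Qp: "Q = ?p ^ (j * N)" unfolding Q_def qj by (simp add: power_mult)
  have chL: "CHAR('a alg_closure) = ?p" by simp
  have ofQ: "of_nat Q = (0 :: 'a alg_closure)"
  proof -
    have "of_nat ?q = (0 :: 'a alg_closure)"
      by (metis ff_card_zero[OF fin] to_ac_0 to_ac_of_nat)
    thus ?thesis unfolding Q_def using N1 by (simp add: of_nat_power power_0_left)
  qed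
  have powQ: "c ^ (?q ^ n) = c" for c :: 'a and n
  proof (induction n)
    case 0 thus ?case by simp
  next
    case (Suc n)
    have "c ^ (?q ^ Suc n) = (c ^ ?q) ^ (?q ^ n)" by (simp add: power_mult)
    also have "\<dots> = c" using Suc ff_pow_card[OF fin, of c] by simp
    finally show ?case .
  qed
  define K where "K = {x :: 'a alg_closure. x ^ Q = x}"
  have cardK: "card K = Q" unfolding K_def by (rule ac_card_roots[OF Q2 ofQ])
  hence finK: "finite K" using Q2 by (intro card_ge_0_finite) simp
  have subK: "ac.subspace K"
    unfolding ac.subspace_def
  proof (intro conjI ballI allI)
    show "0 \<in> K" unfolding K_def using Q2 by (simp add: power_0_left)
  next
    fix x y assume "x \<in> K" "y \<in> K"
    thus "x + y \<in> K" unfolding K_def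
      using freshmans_dream'[where 'a="'a alg_closure", of Q "j * N"] pp chL Qp by simp
  next
    fix c x assume "x \<in> K"
    thus "to_ac c * x \<in> K" unfolding K_def
      by (simp add: power_mult_distrib Q_def powQ flip: to_ac_power)
  qed
  have mulK: "\<forall>x\<in>K. \<forall>y\<in>K. x * y \<in> K" unfolding K_def by (simp add: power_mult_distrib)
  show ?thesis using subK finK cardK mulK Q_def by blast
qed

lemma ac_binom_sum:
  assumes fin: "finite (UNIV :: 'a::field set)"
  shows "(\<Sum>t\<in>UNIV. (a + to_ac (t::'a) * b) ^ (card (UNIV :: 'a set) - 1)) =
           - (b ^ (card (UNIV :: 'a set) - 1))"
proof -
  let ?n = "card (UNIV :: 'a set) - 1"
  have "(\<Sum>t\<in>UNIV. (a + to_ac (t::'a) * b) ^ ?n) =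
        (\<Sum>t\<in>UNIV. \<Sum>k\<le>?n. of_nat (?n choose k) * (to_ac t * b) ^ k * a ^ (?n - k))"
    by (intro sum.cong refl) (subst add.commute, rule binomial_ring)
  also have "\<dots> = (\<Sum>k\<le>?n. \<Sum>t\<in>UNIV. of_nat (?n choose k) * (to_ac t * b) ^ k * a ^ (?n - k))"
    by (rule sum.swap)
  also have "\<dots> = (\<Sum>k\<le>?n. of_nat (?n choose k) * b ^ k * a ^ (?n - k) * to_ac (\<Sum>t\<in>UNIV. t ^ k))"
    by (intro sum.cong refl) (simp add: to_ac_sum sum_distrib_left sum_distrib_right power_mult_distrib mult_ac)
  also have "\<dots> = (\<Sum>k\<le>?n. if k = ?n then - (b ^ ?n) else 0)"
  proof (intro sum.cong refl)
    fix k assume "k \<in> {..?n}"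
    hence k: "k \<le> ?n" by simp
    show "of_nat (?n choose k) * b ^ k * a ^ (?n - k) * to_ac (\<Sum>t\<in>UNIV. (t::'a) ^ k) =
          (if k = ?n then - (b ^ ?n) else 0)"
    proof (cases "k = ?n")
      case True
      thus ?thesis using ff_pow_sum_top[OF fin] by simp
    next
      case False
      hence "k < ?n" using k by simp
      thus ?thesis using ff_pow_sum_small[OF fin] False by simp
    qed
  qed
  also have "\<dots> = - (b ^ ?n)" by simp
  finally show ?thesis .
qed

lemma ac_unit_roots:
  assumes fin: "finite (UNIV :: 'a::field set)"
    and z: "(z :: 'a alg_closure) ^ (card (UNIV :: 'a set) - 1) = 1"
  shows "\<exists>c::'a. c \<noteq> 0 \<and> z = to_ac c"
proof -
  let ?n = "card (UNIV :: 'a set) - 1"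
  have q2: "card (UNIV :: 'a set) \<ge> 2" by (rule ff_card_ge2[OF fin])
  define P :: "'a alg_closure poly" where "P = Polynomial.monom 1 ?n - 1"
  have cP: "Polynomial.coeff P ?n = 1" using q2 by (simp add: P_def coeff_monom)
  hence Pne: "P \<noteq> 0" by auto
  have degP: "Polynomial.degree P \<le> ?n"
    unfolding P_def by (intro degree_diff_le) (auto simp: degree_monom_le)
  define R where "R = {x. poly P x = 0}"
  have finR: "finite R" unfolding R_def by (rule poly_roots_finite[OF Pne])
  have cardR: "card R \<le> ?n" unfolding R_def using card_poly_roots_bound[OF Pne] degP by linarith
  have sub: "to_ac ` (UNIV - {0::'a}) \<subseteq> R"
  proof
    fix x assume "x \<in> to_ac ` (UNIV - {0::'a})"
    then obtain c :: 'a where c: "c \<noteq> 0" "x = to_ac c" by blast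
    have "c * c ^ ?n = c ^ card (UNIV :: 'a set)" using q2 by (cases "card (UNIV :: 'a set)") auto
    also have "\<dots> = c" by (rule ff_pow_card[OF fin])
    finally have "c ^ ?n = 1" using c by simp
    thus "x \<in> R" unfolding R_def P_def using c by (simp add: poly_monom flip: to_ac_power)
  qed
  have "card (to_ac ` (UNIV - {0::'a})) = ?n"
    using fin by (simp add: card_image inj_on_def card_Diff_singleton)
  hence "to_ac ` (UNIV - {0::'a}) = R"
    using card_subset_eq[OF finR sub] cardR card_mono[OF finR sub] by simp
  moreover have "z \<in> R" unfolding R_def P_def using z by (simp add: poly_monom)
  ultimately show ?thesis by blast
qed



lemma sum_W_zero:
  fixes \<psi> :: "'a::field ^ 'n \<Rightarrow> 'a alg_closure"
  assumes fin: "finite (UNIV :: 'a set)"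
    and padd: "\<And>x y. \<psi> (x + y) = \<psi> x + \<psi> y"
    and pscale: "\<And>c x. \<psi> (c *s x) = to_ac c * \<psi> x"
    and W: "vec.subspace W" and dW: "vec.dim W \<ge> 2"
  shows "(\<Sum>v\<in>W. \<psi> v ^ (card (UNIV :: 'a set) - 1)) = 0"
proof -
  let ?q = "card (UNIV :: 'a set)"
  obtain BW where BW: "BW \<subseteq> W" "vec.independent BW" "W \<subseteq> vec.span BW" "card BW = vec.dim W"
    using vec.basis_exists[of W] by metis
  have spW: "vec.span BW = W"
    using BW vec.span_minimal[OF BW(1) W] by auto
  have finBW: "finite BW" using vec.finiteI_independent[OF BW(2)] .
  have "BW \<noteq> {}" using BW(4) dW by (metis card.empty not_numeral_le_zero)
  then obtain w where w: "w \<in> BW" by blast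
  define U where "U = vec.span (BW - {w})"
  have indU: "vec.independent (BW - {w})" using BW(2) by (rule vec.independent_mono) auto
  have cardU: "card U = ?q ^ (card BW - 1)"
    unfolding U_def using vec.card_span_fin[OF fin indU] finBW w by (simp add: card_Diff_singleton)
  have UW: "U \<subseteq> W" unfolding U_def using spW vec.span_mono[of "BW - {w}" BW] by auto
  have wW: "w \<in> W" using w BW(1) by auto
  have wU: "w \<notin> U"
  proof
    assume "w \<in> U"
    hence "vec.dependent BW" unfolding U_def vec.dependent_def using w by blast
    thus False using BW(2) by simp
  qed
  define h where "h = (\<lambda>(u, t). u + t *s w)"
  have bij: "bij_betw h (U \<times> (UNIV :: 'a set)) W"
  proof (rule bij_betw_imageI)
    show "inj_on h (U \<times> UNIV)"
    proof (rule inj_onI, clarify)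
      fix u t u' t' assume u: "u \<in> U" and u': "u' \<in> U" and eq: "h (u, t) = h (u', t')"
      have eq': "u + t *s w = u' + t' *s w" using eq unfolding h_def by simp
      have "(t - t') *s w = t *s w - t' *s w" by (rule vec.scale_left_diff_distrib)
      also have "\<dots> = u' - u" using eq' by (simp add: algebra_simps)
      finally have e: "(t - t') *s w = u' - u" .
      have tt: "t = t'"
      proof (rule ccontr)
        assume "t \<noteq> t'"
        hence nz: "t - t' \<noteq> 0" by simp
        have "inverse (t - t') *s ((t - t') *s w) = (inverse (t - t') * (t - t')) *s w"
          by (rule vec.scale_scale)
        also have "\<dots> = w" using nz by simp
        finally have "w = inverse (t - t') *s ((t - t') *s w)" by simp
        hence "w = inverse (t - t') *s (u' - u)" using e by metis
        moreover have "u' - u \<in> U" unfolding U_def using u u' unfolding U_def by (intro vec.span_diff)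
        ultimately have "w \<in> U" unfolding U_def by (metis vec.span_scale)
        thus False using wU by simp
      qed
      thus "u = u' \<and> t = t'" using e by simp
    qed
  next
    show "h ` (U \<times> UNIV) = W"
    proof
      show "h ` (U \<times> UNIV) \<subseteq> W"
        using UW wW vec.subspace_add[OF W] vec.subspace_scale[OF W] unfolding h_def by auto
    next
      show "W \<subseteq> h ` (U \<times> UNIV)"
      proof
        fix x assume "x \<in> W"
        hence "x \<in> vec.span (insert w (BW - {w}))" using spW w by (simp add: insert_absorb)
        then obtain k where k: "x - k *s w \<in> U" unfolding U_def using vec.span_breakdown_eq by blast
        have "x = h (x - k *s w, k)" unfolding h_def by simp
        thus "x \<in> h ` (U \<times> UNIV)" using k by blast
      qed
    qed
  qed
  have "(\<Sum>v\<in>W. \<psi> v ^ (?q - 1)) = (\<Sum>z\<in>U \<times> (UNIV :: 'a set). \<psi> (h z) ^ (?q - 1))"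
    by (rule sum.reindex_bij_betw[OF bij, symmetric])
  also have "\<dots> = (\<Sum>u\<in>U. \<Sum>t\<in>(UNIV :: 'a set). \<psi> (h (u, t)) ^ (?q - 1))"
    unfolding sum.cartesian_product by (simp add: case_prod_unfold)
  also have "\<dots> = (\<Sum>u\<in>U. - (\<psi> w ^ (?q - 1)))"
  proof (intro sum.cong refl)
    fix u
    show "(\<Sum>t\<in>(UNIV :: 'a set). \<psi> (h (u, t)) ^ (?q - 1)) = - (\<psi> w ^ (?q - 1))"
      unfolding h_def using ac_binom_sum[OF fin, of "\<psi> u" "\<psi> w"] by (simp add: padd pscale)
  qed
  also have "\<dots> = - (of_nat (card U) * \<psi> w ^ (?q - 1))" by simp
  also have "of_nat (card U) = (0 :: 'a alg_closure)"
  proof -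
    have "card BW - 1 \<ge> 1" using BW(4) dW by simp
    moreover have "of_nat ?q = (0 :: 'a alg_closure)"
      by (metis ff_card_zero[OF fin] to_ac_0 to_ac_of_nat)
    ultimately show ?thesis unfolding cardU by (simp add: of_nat_power power_0_left)
  qed
  finally show ?thesis by simp
qed


lemma pt_nonzero:
  assumes "P \<in> (PG_points :: ('a::field ^ 'n) set set)"
  shows "\<exists>v\<in>P. v \<noteq> 0"
proof -
  have "vec.dim P = 1" using assms by (simp add: PG_points_def)
  hence "\<not> P \<subseteq> {0}" using vec.dim_eq_0[of P] by auto
  thus ?thesis by auto
qed

lemma pt_span:
  assumes P: "P \<in> (PG_points :: ('a::field ^ 'n) set set)" and v: "v \<in> P" "v \<noteq> 0"
  shows "P = vec.span {v}"
proof -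
  have sP: "vec.subspace P" and dP: "vec.dim P = 1" using P by (auto simp: PG_points_def)
  have "vec.span {v} \<subseteq> P" using v sP by (intro vec.span_minimal) auto
  moreover have "vec.dim (vec.span {v}) = 1" using v by simp
  ultimately have "vec.span {v} = P"
    using vec.subspace_dim_equal[OF vec.subspace_span sP, of "{v}"] dP by simp
  thus ?thesis by simp
qed

lemma span_pt:
  assumes "(v :: 'a::field ^ 'n) \<noteq> 0"
  shows "vec.span {v} \<in> (PG_points :: ('a ^ 'n) set set)"
  using assms by (simp add: PG_points_def vec.subspace_span)


theorem corollary5p2:
  fixes d :: nat
  assumes "finite (UNIV :: ('a::field) set)"
    and "1 \<le> d" and "d + 2 \<le> CARD('n::finite)"
  shows "\<exists>f :: ('a^'n) set \<Rightarrow> 'a^'n.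
           additive_under (PG_points :: ('a^'n) set set) (PG_blocks d) f"
proof -
  have fin: "finite (UNIV :: 'a set)" by fact
  let ?q = "card (UNIV :: 'a set)" and ?N = "CARD('n)"
  have q2: "?q \<ge> 2" by (rule ff_card_ge2[OF fin])
  have N1: "?N \<ge> 1" by (simp add: Suc_leI)
  obtain K :: "'a alg_closure set" where subK: "ac.subspace K" and finK: "finite K"
    and cardK: "card K = ?q ^ ?N" and mulK: "\<forall>x\<in>K. \<forall>y\<in>K. x * y \<in> K"
    using field_K[OF fin N1] by blast
  have "?q ^ ac.dim K = ?q ^ ?N" using ac.card_subspace_fin[OF fin subK finK] cardK by simp
  hence dimK: "ac.dim K = ?N" using q2 by (simp add: power_inject_exp)
  obtain B where B: "B \<subseteq> K" "ac.independent B" "K \<subseteq> ac.span B" "card B = ac.dim K"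
    using ac.basis_exists[of K] by metis
  have spB: "ac.span B = K" using B ac.span_minimal[OF B(1) subK] by auto
  have finB: "finite B" using B(1) finK by (rule finite_subset)
  obtain b where b: "bij_betw b (UNIV :: 'n set) B"
    using finite_same_card_bij[of "UNIV :: 'n set" B] finB B(4) dimK by auto
  define \<psi> where "\<psi> x = (\<Sum>i\<in>UNIV. to_ac (x $ i) * b i)" for x :: "'a ^ 'n"
  have padd: "\<psi> (x + y) = \<psi> x + \<psi> y" for x y
    by (simp add: \<psi>_def distrib_right sum.distrib)
  have pscale: "\<psi> (c *s x) = to_ac c * \<psi> x" for c x
    by (simp add: \<psi>_def sum_distrib_left mult_ac)
  have psum: "\<psi> (\<Sum>P\<in>S. h P) = (\<Sum>P\<in>S. \<psi> (h P))" for S :: "'z set" and h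
    by (simp add: \<psi>_def sum_component to_ac_sum sum_distrib_right sum.swap[of _ S])
  have p0: "\<psi> 0 = 0" by (simp add: \<psi>_def)
  have pK: "\<psi> x \<in> K" for x
  proof -
    have "\<psi> x \<in> ac.span B" unfolding \<psi>_def
      using b by (intro ac.span_sum ac.span_scale ac.span_base) (auto simp: bij_betw_def)
    thus ?thesis using spB by simp
  qed
  have pinj: "inj \<psi>"
  proof (rule injI)
    fix x y assume eq: "\<psi> x = \<psi> y"
    define z where "z = x - y"
    have "\<psi> z + \<psi> y = \<psi> x" unfolding z_def by (simp flip: padd)
    hence z0: "\<psi> z = 0" using eq by simp
    have ib: "inv_into UNIV b (b i) = i" for i using b by (simp add: bij_betw_def)
    have "\<psi> z = (\<Sum>v\<in>B. to_ac (z $ inv_into UNIV b v) * v)"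
      unfolding \<psi>_def
      using sum.reindex_bij_betw[OF b, of "\<lambda>v. to_ac (z $ inv_into UNIV b v) * v"] ib by simp
    hence sB: "(\<Sum>v\<in>B. to_ac (z $ inv_into UNIV b v) * v) = 0" using z0 by simp
    have "\<forall>v\<in>B. z $ inv_into UNIV b v = 0"
    proof (rule ccontr)
      assume "\<not> ?thesis"
      hence "\<exists>v\<in>B. (\<lambda>v. z $ inv_into UNIV b v) v \<noteq> 0" by simp
      hence "ac.dependent B"
        by (subst ac.dependent_finite[OF finB]) (rule exI[of _ "\<lambda>v. z $ inv_into UNIV b v"], use sB in simp)
      thus False using B(2) by simp
    qed
    hence "z $ i = 0" for i using b ib[of i] by (metis bij_betwE UNIV_I)
    hence "z = 0" by (simp add: vec_eq_iff)
    thus "x = y" unfolding z_def by simp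
  qed
  have finV: "finite (UNIV :: ('a ^ 'n) set)"
  proof -
    have "range (vec_nth :: 'a ^ 'n \<Rightarrow> _) \<subseteq> (UNIV :: 'n set) \<rightarrow>\<^sub>E (UNIV :: 'a set)" by auto
    moreover have "finite ((UNIV :: 'n set) \<rightarrow>\<^sub>E (UNIV :: 'a set))" using fin by (intro finite_PiE) auto
    ultimately have "finite (range (vec_nth :: 'a ^ 'n \<Rightarrow> _))" by (rule finite_subset)
    moreover have "inj (vec_nth :: 'a ^ 'n \<Rightarrow> _)" by (simp add: inj_def vec_eq_iff)
    ultimately show ?thesis using finite_imageD by blast
  qed
  have cardV: "card (UNIV :: ('a ^ 'n) set) = ?q ^ ?N"
    using vec.card_subspace_fin[OF fin vec.subspace_UNIV finV]
    by (simp add: card_cart_basis)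
  have rK: "range \<psi> = K"
  proof (rule card_subset_eq[OF finK])
    show "range \<psi> \<subseteq> K" using pK by auto
    show "card (range \<psi>) = card K" using card_image[OF pinj] cardV cardK by simp
  qed
  define g where "g v = \<psi> v ^ (?q - 1)" for v
  define rep where "rep P = (SOME v. v \<in> P \<and> v \<noteq> 0)" for P :: "('a ^ 'n) set"
  define G where "G P = g (rep P)" for P
  define f where "f P = inv_into UNIV \<psi> (G P)" for P
  have rep: "rep P \<in> P \<and> rep P \<noteq> 0" if "P \<in> PG_points" for P
    unfolding rep_def using pt_nonzero[OF that] by (metis (mono_tags, lifting) someI_ex)
  have powK: "x ^ Suc n \<in> K" if "x \<in> K" for x n
    by (induction n) (use that mulK in auto)
  have GK: "G P \<in> K" for P
  proof -
    have "?q - 1 = Suc (?q - 2)" using q2 by simp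
    thus ?thesis unfolding G_def g_def using powK[OF pK] by metis
  qed
  have pf: "\<psi> (f P) = G P" for P
    unfolding f_def using GK rK by (simp add: f_inv_into_f)
  have gscale: "g (c *s v) = g v" if "c \<noteq> 0" for c v
  proof -
    have "c * c ^ (?q - 1) = c ^ ?q" using q2 by (cases ?q) auto
    also have "\<dots> = c" by (rule ff_pow_card[OF fin])
    finally have "c ^ (?q - 1) = 1" using that by simp
    thus ?thesis unfolding g_def by (simp add: pscale power_mult_distrib flip: to_ac_power)
  qed
  have ofq: "of_nat ?q = (0 :: 'a alg_closure)"
    by (metis ff_card_zero[OF fin] to_ac_0 to_ac_of_nat)
  have g0: "g 0 = 0" unfolding g_def using q2 p0 by (simp add: power_0_left)
  have ptsum: "(\<Sum>v\<in>P - {0}. g v) = - G P" if P: "P \<in> PG_points" for P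
  proof -
    let ?r = "rep P"
    have r: "?r \<in> P" "?r \<noteq> 0" using rep[OF P] by auto
    have "P = vec.span {?r}" by (rule pt_span[OF P r])
    hence Pr: "P = range (\<lambda>k. k *s ?r)" by (simp add: vec.span_singleton)
    have "P - {0} = (\<lambda>c. c *s ?r) ` (UNIV - {0})"
    proof
      show "P - {0} \<subseteq> (\<lambda>c. c *s ?r) ` (UNIV - {0})"
      proof
        fix x assume x: "x \<in> P - {0}"
        then obtain k where k: "x = k *s ?r" using Pr by blast
        have "k \<noteq> 0" using x k by auto
        thus "x \<in> (\<lambda>c. c *s ?r) ` (UNIV - {0})" using k by blast
      qed
    next
      show "(\<lambda>c. c *s ?r) ` (UNIV - {0}) \<subseteq> P - {0}"
        using r(2) Pr by (auto simp: vec.scale_eq_0_iff)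
    qed
    moreover have "inj_on (\<lambda>c. c *s ?r) (UNIV - {0})"
      using r(2) by (intro inj_onI) (metis vec.scale_cancel_right)
    ultimately have "(\<Sum>v\<in>P - {0}. g v) = (\<Sum>c\<in>UNIV - {0}. g (c *s ?r))"
      by (simp add: sum.reindex)
    also have "\<dots> = (\<Sum>c\<in>UNIV - {0::'a}. g ?r)" by (intro sum.cong refl) (simp add: gscale)
    also have "\<dots> = of_nat (?q - 1) * g ?r" using fin by (simp add: card_Diff_singleton)
    also have "\<dots> = (of_nat ?q - 1) * g ?r" using q2 by (simp add: of_nat_diff)
    also have "\<dots> = - G P" unfolding G_def using ofq by simp
    finally show ?thesis .
  qed
  have "additive_under (PG_points :: ('a^'n) set set) (PG_blocks d) f"
    unfolding additive_under_def
  proof (intro conjI ballI)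
    show "inj_on f PG_points"
    proof (rule inj_onI)
      fix P P' assume P: "P \<in> PG_points" and P': "P' \<in> PG_points" and eq: "f P = f P'"
      have GG: "G P = G P'" using pf[of P] pf[of P'] eq by simp
      define v where "v = rep P"
      define v' where "v' = rep P'"
      have v: "v \<in> P" "v \<noteq> 0" using rep[OF P] v_def by auto
      have v': "v' \<in> P'" "v' \<noteq> 0" using rep[OF P'] v'_def by auto
      have nz: "\<psi> v \<noteq> 0" "\<psi> v' \<noteq> 0" using v(2) v'(2) pinj p0 by (metis injD)+
      have "(\<psi> v / \<psi> v') ^ (?q - 1) = g v / g v'" unfolding g_def by (simp add: power_divide)
      also have "\<dots> = 1" using GG nz unfolding G_def g_def v_def v'_def by simp
      finally obtain c where c: "c \<noteq> 0" "\<psi> v / \<psi> v' = to_ac c" using ac_unit_roots[OF fin] by blast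
      hence "\<psi> v = \<psi> (c *s v')" using nz by (simp add: pscale field_simps)
      hence vv: "v = c *s v'" using pinj by (simp add: inj_eq)
      have "v \<in> P'" unfolding vv using v'(1) P' by (intro vec.subspace_scale) (auto simp: PG_points_def)
      thus "P = P'" using pt_span[OF P v] pt_span[OF P' _ v(2)] by simp
    qed
  next
    fix Bl :: "('a ^ 'n) set set" assume "Bl \<in> PG_blocks d"
    then obtain W :: "('a ^ 'n) set" where Bl: "Bl = {P \<in> PG_points. P \<subseteq> W}" and W: "vec.subspace W"
      and dW: "vec.dim W = d + 1" unfolding PG_blocks_def by blast
    have dW2: "vec.dim W \<ge> 2" using dW assms(2) by simp
    have s0: "(\<Sum>v\<in>W. g v) = 0" unfolding g_def by (rule sum_W_zero[OF fin padd pscale W dW2])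
    have finBl: "finite Bl" using finite_Pow_iff[THEN iffD2, OF finV] by (rule finite_subset[rotated]) auto
    have finW: "finite W" using finV by (rule finite_subset[rotated]) auto
    have Wu: "W - {0} = (\<Union>P\<in>Bl. P - {0})"
    proof
      show "W - {0} \<subseteq> (\<Union>P\<in>Bl. P - {0})"
      proof
        fix x assume x: "x \<in> W - {0}"
        have "vec.span {x} \<subseteq> W" using x W by (intro vec.span_minimal) auto
        hence "vec.span {x} \<in> Bl" unfolding Bl using span_pt[of x] x by auto
        moreover have "x \<in> vec.span {x} - {0}" using x by (simp add: vec.span_base)
        ultimately show "x \<in> (\<Union>P\<in>Bl. P - {0})" by blast
      qed
    qed (auto simp: Bl)
    have disj: "\<forall>P\<in>Bl. \<forall>P'\<in>Bl. P \<noteq> P' \<longrightarrow> (P - {0}) \<inter> (P' - {0}) = {}"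
    proof (intro ballI impI)
      fix P P' assume P: "P \<in> Bl" and P': "P' \<in> Bl" and ne: "P \<noteq> P'"
      show "(P - {0}) \<inter> (P' - {0}) = {}"
      proof (rule ccontr)
        assume "\<not> ?thesis"
        then obtain x where x: "x \<in> P" "x \<in> P'" "x \<noteq> 0" by blast
        have "P = vec.span {x}" using P x unfolding Bl by (intro pt_span) auto
        moreover have "P' = vec.span {x}" using P' x unfolding Bl by (intro pt_span) auto
        ultimately show False using ne by simp
      qed
    qed
    have "(\<Sum>v\<in>W. g v) = (\<Sum>v\<in>W - {0}. g v)"
      using g0 finW by (intro sum.mono_neutral_right) auto
    also have "\<dots> = (\<Sum>P\<in>Bl. \<Sum>v\<in>P - {0}. g v)"
      unfolding Wu by (rule sum.UNION_disjoint[OF finBl _ disj]) (use finV in \<open>auto intro: finite_subset\<close>)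
    also have "\<dots> = (\<Sum>P\<in>Bl. - G P)"
      by (intro sum.cong refl ptsum) (auto simp: Bl)
    finally have "(\<Sum>P\<in>Bl. G P) = 0" using s0 by (simp add: sum_negf)
    moreover have "\<psi> (\<Sum>P\<in>Bl. f P) = (\<Sum>P\<in>Bl. G P)" by (simp add: psum pf)
    ultimately have "\<psi> (\<Sum>P\<in>Bl. f P) = \<psi> 0" using p0 by simp
    thus "(\<Sum>P\<in>Bl. f P) = 0" using pinj by (simp add: inj_eq)
  qed
  thus ?thesis by blast
qed

end
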